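(* Let $(X,S)$ be an association scheme with the trivial partition $S=\{\mathbf{1},\sigma\}$, where $\mathbf{1}=\{(x,x)\mid x\in X\}$ and $\sigma=(X\times X)\setminus\mathbf{1}$. If $\sharp X\geq3$, then the group $h\mathrm{aut}(\jmath(X,S))$ is isomorphic to the symmetric group on $\sharp X$ letters. If $\sharp X=2$, then $h\mathrm{aut}(\jmath(X,S))$ is trivial.
   Context: An association scheme is a pair $(X,S)$ with $X$ a finite set and $S$ a partition of $X\times X$ containing $\{(x,x)\mid x\in X\}$, closed under $g\mapsto g^*=\{(y,x)\mid(x,y)\in g\}$, such that for all $e,f,g\in S$ the number $\sharp\{y\in X\mid(x,y)\in e,(y,z)\in f\}$ is the same for all $(x,z)\in g$. The quasi-schemoid $\jmath(X,S)=(\mathcal{C},S)$ has $ob(\mathcal{C})=X$, $\mathrm{Hom}_{\mathcal{C}}(y,x)=\{(x,y)\}$, composition $(z,x)\circ(x,y)=(z,y)$, and partition $S$ of $mor(\mathcal{C})=X\times X$. A morphism of quasi-schemoids is a functor sending each block of the source partition into some block of the target partition. Product: $(\mathcal{C},S)\times(\mathcal{E},S')=(\mathcal{C}\times\mathcal{E},\{\sigma\times\tau\})$. $[1]$ has objects $0,1$ and one non-identity morphism $0\to1$; $I=([1],\{\{f\}\}_{f})$. A homotopy $H\colon F\Rightarrow G$ is a morphism $H\colon(\mathcal{C},S)\times I\to(\mathcal{D},S')$ with $H\circ\varepsilon_0=F$, $H\circ\varepsilon_1=G$ ($\varepsilon_i(a)=(a,i)$, $\varepsilon_i(f)=(f,1_i)$).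 $F\sim G$ means there is a homotopy $F\Rightarrow G$ or $G\Rightarrow F$; $F\simeq G$ means a finite chain $F=F_0\sim\cdots\sim F_n=G$; $\simeq$ is an equivalence relation compatible with composition. A self-homotopy equivalence of $A$ is a morphism $F\colon A\to A$ for which there is $G\colon A\to A$ with $FG\simeq1$ and $GF\simeq1$; $h\mathrm{aut}(A)$ is the group of $\simeq$-classes of self-homotopy equivalences of $A$ under composition. *)

theory Defs
  imports "HOL-Algebra.Sym_Groups"
begin

record ('o, 'm) qschemoid =
  Obj  :: "'o set"
  Mor  :: "'m set"
  Dom  :: "'m \<Rightarrow> 'o"
  Cod  :: "'m \<Rightarrow> 'o"
  Idm  :: "'o \<Rightarrow> 'm"
  Comp :: "'m \<Rightarrow> 'm \<Rightarrow> 'm"   (* Comp g f = g \<circ> f, defined when Dom g = Cod f *)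
  Part :: "'m set set"

definition assoc_scheme :: "'a set \<Rightarrow> ('a \<times> 'a) set set \<Rightarrow> bool" where
  "assoc_scheme X S \<longleftrightarrow>
     finite X \<and>
     \<Union>S = X \<times> X \<and> {} \<notin> S \<and>
     (\<forall>g\<in>S. \<forall>h\<in>S. g \<noteq> h \<longrightarrow> g \<inter> h = {}) \<and>
     Id_on X \<in> S \<and>
     (\<forall>g\<in>S. g\<inverse> \<in> S) \<and>
     (\<forall>e\<in>S. \<forall>f\<in>S. \<forall>g\<in>S. \<forall>p\<in>g. \<forall>q\<in>g.
        card {y\<in>X. (fst p, y) \<in> e \<and> (y, snd p) \<in> f}
      = card {y\<in>X. (fst q, y) \<in> e \<and> (y, snd q) \<in> f})"

(* The quasi-schemoid \<jmath>(X,S): the morphism (x,y) goes from y to x *)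
definition jmath :: "'a set \<Rightarrow> ('a \<times> 'a) set set \<Rightarrow> ('a, 'a \<times> 'a) qschemoid" where
  "jmath X S = \<lparr> Obj = X, Mor = X \<times> X, Dom = snd, Cod = fst,
                Idm = (\<lambda>x. (x, x)), Comp = (\<lambda>g f. (fst g, snd f)), Part = S \<rparr>"

definition qs_morphism ::
  "('o1, 'm1) qschemoid \<Rightarrow> ('o2, 'm2) qschemoid \<Rightarrow> ('o1 \<Rightarrow> 'o2) \<times> ('m1 \<Rightarrow> 'm2) \<Rightarrow> bool" where
  "qs_morphism A B F \<longleftrightarrow>
     (\<forall>a\<in>Obj A. fst F a \<in> Obj B) \<and>
     (\<forall>f\<in>Mor A. snd F f \<in> Mor B \<and> Dom B (snd F f) = fst F (Dom A f)
                  \<and> Cod B (snd F f) = fst F (Cod A f)) \<and>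
     (\<forall>a\<in>Obj A. snd F (Idm A a) = Idm B (fst F a)) \<and>
     (\<forall>f\<in>Mor A. \<forall>g\<in>Mor A. Dom A g = Cod A f \<longrightarrow>
        snd F (Comp A g f) = Comp B (snd F g) (snd F f)) \<and>
     (\<forall>\<sigma>\<in>Part A. \<exists>\<tau>\<in>Part B. snd F ` \<sigma> \<subseteq> \<tau>)"

definition qs_prod ::
  "('o1, 'm1) qschemoid \<Rightarrow> ('o2, 'm2) qschemoid \<Rightarrow> ('o1 \<times> 'o2, 'm1 \<times> 'm2) qschemoid" where
  "qs_prod A B = \<lparr> Obj = Obj A \<times> Obj B, Mor = Mor A \<times> Mor B,
       Dom = (\<lambda>(f, g). (Dom A f, Dom B g)), Cod = (\<lambda>(f, g). (Cod A f, Cod B g)),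
       Idm = (\<lambda>(a, b). (Idm A a, Idm B b)),
       Comp = (\<lambda>(f', g') (f, g). (Comp A f' f, Comp B g' g)),
       Part = {\<sigma> \<times> \<tau> | \<sigma> \<tau>. \<sigma> \<in> Part A \<and> \<tau> \<in> Part B} \<rparr>"

(* The quasi-schemoid I = ([1], discrete partition). Objects 0,1; a morphism is a
   pair (target, source) with source \<le> target. *)
definition qs_I :: "(nat, nat \<times> nat) qschemoid" where
  "qs_I = \<lparr> Obj = {0, 1}, Mor = {(0, 0), (1, 1), (1, 0)}, Dom = snd, Cod = fst,
            Idm = (\<lambda>i. (i, i)), Comp = (\<lambda>g f. (fst g, snd f)),
            Part = {{f} | f. f \<in> {(0, 0), (1, 1), (1, 0)}} \<rparr>"

definition qs_homotopy ::
  "('o1, 'm1) qschemoid \<Rightarrow> ('o2, 'm2) qschemoid \<Rightarrow>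
   ('o1 \<times> nat \<Rightarrow> 'o2) \<times> ('m1 \<times> (nat \<times> nat) \<Rightarrow> 'm2) \<Rightarrow>
   ('o1 \<Rightarrow> 'o2) \<times> ('m1 \<Rightarrow> 'm2) \<Rightarrow> ('o1 \<Rightarrow> 'o2) \<times> ('m1 \<Rightarrow> 'm2) \<Rightarrow> bool" where
  "qs_homotopy A B H F G \<longleftrightarrow>
     qs_morphism (qs_prod A qs_I) B H \<and>
     (\<forall>a\<in>Obj A. fst H (a, 0) = fst F a \<and> fst H (a, 1) = fst G a) \<and>
     (\<forall>f\<in>Mor A. snd H (f, (0, 0)) = snd F f \<and> snd H (f, (1, 1)) = snd G f)"

definition qs_htpy_sim ::
  "('o1, 'm1) qschemoid \<Rightarrow> ('o2, 'm2) qschemoid \<Rightarrow>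
   ('o1 \<Rightarrow> 'o2) \<times> ('m1 \<Rightarrow> 'm2) \<Rightarrow> ('o1 \<Rightarrow> 'o2) \<times> ('m1 \<Rightarrow> 'm2) \<Rightarrow> bool" where
  "qs_htpy_sim A B F G \<longleftrightarrow> (\<exists>H. qs_homotopy A B H F G) \<or> (\<exists>H. qs_homotopy A B H G F)"

definition qs_simeq ::
  "('o1, 'm1) qschemoid \<Rightarrow> ('o2, 'm2) qschemoid \<Rightarrow>
   ('o1 \<Rightarrow> 'o2) \<times> ('m1 \<Rightarrow> 'm2) \<Rightarrow> ('o1 \<Rightarrow> 'o2) \<times> ('m1 \<Rightarrow> 'm2) \<Rightarrow> bool" where
  "qs_simeq A B = (qs_htpy_sim A B)\<^sup>*\<^sup>*"

definition qs_comp :: "('o \<Rightarrow> 'o) \<times> ('m \<Rightarrow> 'm) \<Rightarrow> ('o \<Rightarrow> 'o) \<times> ('m \<Rightarrow> 'm) \<Rightarrow> ('o \<Rightarrow> 'o) \<times> ('m \<Rightarrow> 'm)" where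
  "qs_comp F G = (fst F \<circ> fst G, snd F \<circ> snd G)"

definition qs_idmor :: "('o \<Rightarrow> 'o) \<times> ('m \<Rightarrow> 'm)" where
  "qs_idmor = (id, id)"

definition self_heq :: "('o, 'm) qschemoid \<Rightarrow> ('o \<Rightarrow> 'o) \<times> ('m \<Rightarrow> 'm) \<Rightarrow> bool" where
  "self_heq A F \<longleftrightarrow> qs_morphism A A F \<and>
     (\<exists>G. qs_morphism A A G \<and> qs_simeq A A (qs_comp F G) qs_idmor
                           \<and> qs_simeq A A (qs_comp G F) qs_idmor)"

definition hclass :: "('o, 'm) qschemoid \<Rightarrow> ('o \<Rightarrow> 'o) \<times> ('m \<Rightarrow> 'm) \<Rightarrow> (('o \<Rightarrow> 'o) \<times> ('m \<Rightarrow> 'm)) set" where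
  "hclass A F = {G. qs_morphism A A G \<and> qs_simeq A A F G}"

definition haut :: "('o, 'm) qschemoid \<Rightarrow> (('o \<Rightarrow> 'o) \<times> ('m \<Rightarrow> 'm)) set monoid" where
  "haut A = \<lparr> carrier = hclass A ` {F. self_heq A F},
             mult = (\<lambda>X Y. hclass A (qs_comp (SOME F. F \<in> X) (SOME G. G \<in> Y))),
             one = hclass A qs_idmor \<rparr>"

end

theory Submission
  imports Defs
begin

definition J :: "'a set \<Rightarrow> ('a, 'a \<times> 'a) qschemoid" where
  "J X = jmath X {Id_on X, X \<times> X - Id_on X}"

lemma J_simps[simp]: "Obj (J X) = X" "Mor (J X) = X \<times> X" "Dom (J X) = snd" "Cod (J X) = fst"
  "Idm (J X) = (\<lambda>x. (x,x))" "Comp (J X) = (\<lambda>g f. (fst g, snd f))" "Part (J X) = {Id_on X, X \<times> X - Id_on X}"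
  by (simp_all add: J_def jmath_def)

lemma morph_dest:
  assumes "qs_morphism (J X) (J X) F"
  shows "\<forall>x\<in>X. fst F x \<in> X" "\<forall>x\<in>X. \<forall>y\<in>X. snd F (x,y) = (fst F x, fst F y)"
  using assms unfolding qs_morphism_def by (auto simp: prod_eq_iff)

lemma morph_intro:
  assumes "\<forall>x\<in>X. fst F x \<in> X" "\<forall>x\<in>X. \<forall>y\<in>X. snd F (x,y) = (fst F x, fst F y)" "inj_on (fst F) X"
  shows "qs_morphism (J X) (J X) F"
proof -
  have "snd F ` Id_on X \<subseteq> Id_on X" using assms by (auto simp: Id_on_iff)
  moreover have "snd F ` (X \<times> X - Id_on X) \<subseteq> X \<times> X - Id_on X" using assms
    by (auto simp: Id_on_iff inj_on_def)
  ultimately show ?thesis using assms unfolding qs_morphism_def by auto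
qed

lemma Part_prod: "Part (qs_prod (J X) qs_I) = {\<sigma> \<times> {f} | \<sigma> f. \<sigma> \<in> {Id_on X, X \<times> X - Id_on X} \<and> f \<in> {(0, 0), (1, 1), (1, 0)}}"
  unfolding qs_prod_def qs_I_def by auto

lemma Part_prodI: "\<sigma> \<in> {Id_on X, X \<times> X - Id_on X} \<Longrightarrow> f \<in> {(0, 0), (1, 1), (1, 0)} \<Longrightarrow> \<sigma> \<times> {f} \<in> Part (qs_prod (J X) qs_I)"
  unfolding Part_prod by blast

lemma prod_simps[simp]: "Obj (qs_prod (J X) qs_I) = X \<times> {0,1}"
  "Mor (qs_prod (J X) qs_I) = (X \<times> X) \<times> {(0, 0), (1, 1), (1, 0)}"
  "Dom (qs_prod (J X) qs_I) ((x,y),(i,j)) = (y, j)"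
  "Cod (qs_prod (J X) qs_I) ((x,y),(i,j)) = (x, i)"
  "Idm (qs_prod (J X) qs_I) (a,i) = ((a,a),(i,i))"
  "Comp (qs_prod (J X) qs_I) ((x',y'),(i',j')) ((x,y),(i,j)) = ((x',y),(i',j))"
  by (simp_all add: qs_prod_def qs_I_def)

lemma htpy_dest:
  assumes "qs_homotopy (J X) (J X) H F G"
  shows "\<forall>x\<in>X. fst F x \<in> X" "\<forall>x\<in>X. fst G x \<in> X"
    "(\<forall>x\<in>X. fst G x = fst F x) \<or> (\<forall>x\<in>X. fst G x \<noteq> fst F x)"
    "(\<forall>x\<in>X. \<forall>y\<in>X. x \<noteq> y \<longrightarrow> fst G x = fst F y) \<or> (\<forall>x\<in>X. \<forall>y\<in>X. x \<noteq> y \<longrightarrow> fst G x \<noteq> fst F y)"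
proof -
  have M: "qs_morphism (qs_prod (J X) qs_I) (J X) H"
    and H0: "\<forall>a\<in>X. fst H (a, 0) = fst F a \<and> fst H (a, 1) = fst G a"
    using assms unfolding qs_homotopy_def by auto
  have ob0: "\<forall>a\<in>Obj (qs_prod (J X) qs_I). fst H a \<in> Obj (J X)"
    and mo0: "\<forall>f\<in>Mor (qs_prod (J X) qs_I). snd H f \<in> Mor (J X) \<and> Dom (J X) (snd H f) = fst H (Dom (qs_prod (J X) qs_I) f)
                  \<and> Cod (J X) (snd H f) = fst H (Cod (qs_prod (J X) qs_I) f)"
    and pa0: "\<forall>\<sigma>\<in>Part (qs_prod (J X) qs_I). \<exists>\<tau>\<in>Part (J X). snd H ` \<sigma> \<subseteq> \<tau>"
    using M unfolding qs_morphism_def by blast+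
  have ob: "\<forall>a\<in>X \<times> {0,1}. fst H a \<in> X" using ob0 by simp
  have mo: "\<forall>f\<in>Mor (qs_prod (J X) qs_I). snd H f \<in> X \<times> X \<and> snd (snd H f) = fst H (Dom (qs_prod (J X) qs_I) f)
                  \<and> fst (snd H f) = fst H (Cod (qs_prod (J X) qs_I) f)" using mo0 by (simp only: J_simps)
  have pa: "\<forall>\<sigma>\<in>Part (qs_prod (J X) qs_I). \<exists>\<tau>\<in>{Id_on X, X \<times> X - Id_on X}. snd H ` \<sigma> \<subseteq> \<tau>"
    using pa0 by (simp only: J_simps)
  show "\<forall>x\<in>X. fst F x \<in> X" "\<forall>x\<in>X. fst G x \<in> X"
    using ob H0 by force+
  have HV: "snd H ((x,y),(1,0)) = (fst G x, fst F y)" if "x \<in> X" "y \<in> X" for x y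
  proof -
    have "((x,y),(1::nat,0::nat)) \<in> Mor (qs_prod (J X) qs_I)" using that by simp
    then have "snd (snd H ((x,y),(1,0))) = fst H (y,0)" "fst (snd H ((x,y),(1,0))) = fst H (x,1)"
      using mo by (metis prod_simps(3), metis prod_simps(4))
    then have "snd (snd H ((x,y),(1,0))) = fst F y" "fst (snd H ((x,y),(1,0))) = fst G x"
      using H0 that by auto
    then show ?thesis by (simp add: prod_eq_iff)
  qed
  have "Id_on X \<times> {(1,0)} \<in> Part (qs_prod (J X) qs_I)" by (rule Part_prodI) auto
  from bspec[OF pa this] obtain \<tau> where t: "\<tau> \<in> {Id_on X, X \<times> X - Id_on X}" "snd H ` (Id_on X \<times> {(1,0)}) \<subseteq> \<tau>"
    by blast
  show "(\<forall>x\<in>X. fst G x = fst F x) \<or> (\<forall>x\<in>X. fst G x \<noteq> fst F x)"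
  proof (cases "\<tau> = Id_on X")
    case True
    { fix x assume x: "x \<in> X"
      then have "((x,x),(1::nat,0::nat)) \<in> Id_on X \<times> {(1,0)}" by (auto simp: Id_on_iff)
      from subsetD[OF t(2) imageI[OF this]] have "snd H ((x,x),(1,0)) \<in> \<tau>" .
      then have "fst G x = fst F x" using HV[OF x x] True by (auto simp: Id_on_iff) }
    then show ?thesis by blast
  next
    case False
    then have T: "\<tau> = X \<times> X - Id_on X" using t by blast
    { fix x assume x: "x \<in> X"
      then have "((x,x),(1::nat,0::nat)) \<in> Id_on X \<times> {(1,0)}" by (auto simp: Id_on_iff)
      from subsetD[OF t(2) imageI[OF this]] have "snd H ((x,x),(1,0)) \<in> \<tau>" .
      then have "fst G x \<noteq> fst F x" using HV[OF x x] T by (auto simp: Id_on_iff) }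
    then show ?thesis by blast
  qed
  have "(X \<times> X - Id_on X) \<times> {(1,0)} \<in> Part (qs_prod (J X) qs_I)" by (rule Part_prodI) auto
  from bspec[OF pa this] obtain \<tau>' where t': "\<tau>' \<in> {Id_on X, X \<times> X - Id_on X}" "snd H ` ((X \<times> X - Id_on X) \<times> {(1,0)}) \<subseteq> \<tau>'"
    by blast
  show "(\<forall>x\<in>X. \<forall>y\<in>X. x \<noteq> y \<longrightarrow> fst G x = fst F y) \<or> (\<forall>x\<in>X. \<forall>y\<in>X. x \<noteq> y \<longrightarrow> fst G x \<noteq> fst F y)"
  proof (cases "\<tau>' = Id_on X")
    case True
    { fix x y assume x: "x \<in> X" "y \<in> X" "x \<noteq> y"
      then have "((x,y),(1::nat,0::nat)) \<in> (X \<times> X - Id_on X) \<times> {(1,0)}" by (auto simp: Id_on_iff)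
      from subsetD[OF t'(2) imageI[OF this]] have "snd H ((x,y),(1,0)) \<in> \<tau>'" .
      then have "fst G x = fst F y" using HV[OF x(1,2)] True by (auto simp: Id_on_iff) }
    then show ?thesis by blast
  next
    case False
    then have T: "\<tau>' = X \<times> X - Id_on X" using t' by blast
    { fix x y assume x: "x \<in> X" "y \<in> X" "x \<noteq> y"
      then have "((x,y),(1::nat,0::nat)) \<in> (X \<times> X - Id_on X) \<times> {(1,0)}" by (auto simp: Id_on_iff)
      from subsetD[OF t'(2) imageI[OF this]] have "snd H ((x,y),(1,0)) \<in> \<tau>'" .
      then have "fst G x \<noteq> fst F y" using HV[OF x(1,2)] T by (auto simp: Id_on_iff) }
    then show ?thesis by blast
  qed
qed


lemma three_elems:
  assumes "finite X" "3 \<le> card X" "x \<in> X"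
  obtains y z where "y \<in> X" "z \<in> X" "y \<noteq> x" "z \<noteq> x" "y \<noteq> z"
proof -
  have "2 \<le> card (X - {x})" using assms by (simp add: card_Diff_singleton)
  then have "X - {x} \<noteq> {}" by (metis card.empty not_numeral_le_zero)
  then obtain y where y: "y \<in> X - {x}" by blast
  have "1 \<le> card (X - {x} - {y})" using \<open>2 \<le> card (X - {x})\<close> y assms(1) by (simp add: card_Diff_singleton)
  then have "X - {x} - {y} \<noteq> {}" by (metis card.empty not_one_le_zero)
  then obtain z where z: "z \<in> X - {x} - {y}" by blast
  have "y \<in> X - {x}" "z \<in> X - {x}" "y \<noteq> z" using y z by auto
  then show ?thesis using that by blast
qed

lemma agree3:
  assumes fin: "finite X" and c3: "3 \<le> card X"
    and fX: "\<forall>x\<in>X. f x \<in> X" and gX: "\<forall>x\<in>X. g x \<in> X"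
    and inj: "inj_on f X \<or> inj_on g X"
    and B: "(\<forall>x\<in>X. \<forall>y\<in>X. x \<noteq> y \<longrightarrow> g x = f y) \<or> (\<forall>x\<in>X. \<forall>y\<in>X. x \<noteq> y \<longrightarrow> g x \<noteq> f y)"
  shows "\<forall>x\<in>X. g x = f x"
proof -
  have ne: "X \<noteq> {}" using c3 by auto
  then obtain x0 where x0: "x0 \<in> X" by blast
  have nB: "\<not> (\<forall>x\<in>X. \<forall>y\<in>X. x \<noteq> y \<longrightarrow> g x = f y)"
  proof
    assume E: "\<forall>x\<in>X. \<forall>y\<in>X. x \<noteq> y \<longrightarrow> g x = f y"
    obtain y z where yz: "y \<in> X" "z \<in> X" "y \<noteq> x0" "z \<noteq> x0" "y \<noteq> z"
      using three_elems[OF fin c3 x0] by blast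
    show False using inj
    proof
      assume "inj_on f X"
      moreover have "f y = f z" using E x0 yz by metis
      ultimately show False using yz by (meson inj_onD)
    next
      assume "inj_on g X"
      moreover have "g y = g z" using E x0 yz by metis
      ultimately show False using yz by (meson inj_onD)
    qed
  qed
  then have D: "\<forall>x\<in>X. \<forall>y\<in>X. x \<noteq> y \<longrightarrow> g x \<noteq> f y" using B by blast
  show ?thesis
  proof
    fix x assume x: "x \<in> X"
    show "g x = f x" using inj
    proof
      assume "inj_on f X"
      then have "f ` X = X" using endo_inj_surj[OF fin] fX by blast
      then obtain y where "y \<in> X" "g x = f y" using gX x by (metis imageE)
      then show ?thesis using D x by metis
    next
      assume "inj_on g X"
      then have "g ` X = X" using endo_inj_surj[OF fin] gX by blast
      then obtain y where "y \<in> X" "f x = g y" using fX x by (metis imageE)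
      then show ?thesis using D x by metis
    qed
  qed
qed

lemma agree2:
  assumes c2: "card X = 2"
    and fX: "\<forall>x\<in>X. f x \<in> X" and gX: "\<forall>x\<in>X. g x \<in> X"
    and A: "(\<forall>x\<in>X. g x = f x) \<or> (\<forall>x\<in>X. g x \<noteq> f x)"
  shows "inj_on f X \<longleftrightarrow> inj_on g X"
proof -
  obtain a b where X: "X = {a,b}" "a \<noteq> b" using c2 card_2_iff by metis
  have i1: "inj_on f X \<longleftrightarrow> f a \<noteq> f b" "inj_on g X \<longleftrightarrow> g a \<noteq> g b"
    unfolding X(1) using X(2) by (auto simp: inj_on_def)
  have fa: "f a = a \<or> f a = b" "f b = a \<or> f b = b" "g a = a \<or> g a = b" "g b = a \<or> g b = b"
    using fX gX unfolding X(1) by auto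
  have A': "(g a = f a \<and> g b = f b) \<or> (g a \<noteq> f a \<and> g b \<noteq> f b)"
    using A unfolding X(1) by auto
  show ?thesis unfolding i1 using fa A' X(2) by smt
qed

lemma simeq_refl: "qs_simeq A B F F"
  unfolding qs_simeq_def by simp

lemma simeq_trans: "qs_simeq A B F G \<Longrightarrow> qs_simeq A B G K \<Longrightarrow> qs_simeq A B F K"
  unfolding qs_simeq_def by (rule rtranclp_trans)

lemma simeq_sym: "qs_simeq A B F G \<Longrightarrow> qs_simeq A B G F"
  unfolding qs_simeq_def
proof (induction rule: rtranclp_induct)
  case base then show ?case by simp
next
  case (step y z)
  have "qs_htpy_sim A B z y" using step(2) unfolding qs_htpy_sim_def by blast
  then show ?case using step(3) by (rule converse_rtranclp_into_rtranclp)
qed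

lemma simeq_single: "qs_homotopy A B H F G \<Longrightarrow> qs_simeq A B F G"
  unfolding qs_simeq_def qs_htpy_sim_def by blast


definition mkH :: "('a \<Rightarrow> 'a) \<Rightarrow> ('a \<Rightarrow> 'a) \<Rightarrow> ('a \<times> nat \<Rightarrow> 'a) \<times> (('a \<times> 'a) \<times> (nat \<times> nat) \<Rightarrow> 'a \<times> 'a)" where
  "mkH f g = (\<lambda>(a,i). if i = 0 then f a else g a,
              \<lambda>((x,y),(i,j)). (if i = 0 then f x else g x, if j = 0 then f y else g y))"

lemma mkH_simps[simp]: "fst (mkH f g) (a,i) = (if i = 0 then f a else g a)"
  "snd (mkH f g) ((x,y),(i,j)) = (if i = 0 then f x else g x, if j = 0 then f y else g y)"
  by (simp_all add: mkH_def)

lemma htpy_construct: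
  assumes FX: "\<forall>x\<in>X. fst F x \<in> X" and GX: "\<forall>x\<in>X. fst G x \<in> X"
    and Fm: "\<forall>x\<in>X. \<forall>y\<in>X. snd F (x,y) = (fst F x, fst F y)"
    and Gm: "\<forall>x\<in>X. \<forall>y\<in>X. snd G (x,y) = (fst G x, fst G y)"
    and iF: "inj_on (fst F) X" and iG: "inj_on (fst G) X"
    and A: "(\<forall>x\<in>X. fst G x = fst F x) \<or> (\<forall>x\<in>X. fst G x \<noteq> fst F x)"
    and B: "(\<forall>x\<in>X. \<forall>y\<in>X. x \<noteq> y \<longrightarrow> fst G x = fst F y) \<or> (\<forall>x\<in>X. \<forall>y\<in>X. x \<noteq> y \<longrightarrow> fst G x \<noteq> fst F y)"
  shows "qs_homotopy (J X) (J X) (mkH (fst F) (fst G)) F G"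
proof -
  let ?H = "mkH (fst F) (fst G)"
  let ?P = "qs_prod (J X) qs_I"
  let ?S = "{Id_on X, X \<times> X - Id_on X}"
  have c1: "\<forall>a\<in>Obj ?P. fst ?H a \<in> Obj (J X)" using FX GX by auto
  have c2: "\<forall>f\<in>Mor ?P. snd ?H f \<in> Mor (J X) \<and> Dom (J X) (snd ?H f) = fst ?H (Dom ?P f)
                  \<and> Cod (J X) (snd ?H f) = fst ?H (Cod ?P f)"
  proof
    fix f assume "f \<in> Mor ?P"
    then obtain x y i j where f: "f = ((x,y),(i,j))" "x \<in> X" "y \<in> X" by auto
    show "snd ?H f \<in> Mor (J X) \<and> Dom (J X) (snd ?H f) = fst ?H (Dom ?P f)
                  \<and> Cod (J X) (snd ?H f) = fst ?H (Cod ?P f)"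
      using f FX GX by simp
  qed
  have c3: "\<forall>a\<in>Obj ?P. snd ?H (Idm ?P a) = Idm (J X) (fst ?H a)"
  proof
    fix a assume "a \<in> Obj ?P"
    then obtain x i where "a = (x,i)" by auto
    then show "snd ?H (Idm ?P a) = Idm (J X) (fst ?H a)" by simp
  qed
  have c4: "\<forall>f\<in>Mor ?P. \<forall>g\<in>Mor ?P. Dom ?P g = Cod ?P f \<longrightarrow>
        snd ?H (Comp ?P g f) = Comp (J X) (snd ?H g) (snd ?H f)"
  proof (intro ballI impI)
    fix f g assume "f \<in> Mor ?P" "g \<in> Mor ?P" "Dom ?P g = Cod ?P f"
    obtain x y i j where f: "f = ((x,y),(i,j))" by (metis prod.collapse)
    obtain x' y' i' j' where g: "g = ((x',y'),(i',j'))" by (metis prod.collapse)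
    show "snd ?H (Comp ?P g f) = Comp (J X) (snd ?H g) (snd ?H f)"
      unfolding f g by simp
  qed
  have c5: "\<forall>\<sigma>\<in>Part ?P. \<exists>\<tau>\<in>Part (J X). snd ?H ` \<sigma> \<subseteq> \<tau>"
  proof
    fix \<sigma> assume "\<sigma> \<in> Part ?P"
    then obtain s e where se: "\<sigma> = s \<times> {e}" "s \<in> ?S" "e \<in> {(0, 0), (1, 1), (1, 0)}"
      unfolding Part_prod by blast
    have I1: "snd ?H ` (Id_on X \<times> {e}) \<subseteq> Id_on X" if "e = (0,0) \<or> e = (1,1)"
      using that FX GX by (auto simp: Id_on_iff)
    have I2: "snd ?H ` ((X \<times> X - Id_on X) \<times> {e}) \<subseteq> X \<times> X - Id_on X" if "e = (0,0) \<or> e = (1,1)"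
    proof
      fix p assume "p \<in> snd ?H ` ((X \<times> X - Id_on X) \<times> {e})"
      then obtain x y where xy: "x \<in> X" "y \<in> X" "x \<noteq> y" "p = snd ?H ((x,y),e)" by (auto simp: Id_on_iff)
      show "p \<in> X \<times> X - Id_on X"
        using that
      proof
        assume "e = (0,0)" then show ?thesis using xy FX iF by (auto simp: Id_on_iff inj_on_def)
      next
        assume "e = (1,1)" then show ?thesis using xy GX iG by (auto simp: Id_on_iff inj_on_def)
      qed
    qed
    have I3: "\<exists>\<tau>\<in>Part (J X). snd ?H ` (Id_on X \<times> {(1,0)}) \<subseteq> \<tau>"
      using A
    proof
      assume a: "\<forall>x\<in>X. fst G x = fst F x"
      have "snd ?H ` (Id_on X \<times> {(1,0)}) \<subseteq> Id_on X"
      proof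
        fix p assume "p \<in> snd ?H ` (Id_on X \<times> {(1,0)})"
        then obtain x where "x \<in> X" "p = snd ?H ((x,x),(1,0))" by (auto simp: Id_on_iff)
        then show "p \<in> Id_on X" using a FX by (auto simp: Id_on_iff)
      qed
      then show ?thesis by auto
    next
      assume a: "\<forall>x\<in>X. fst G x \<noteq> fst F x"
      have "snd ?H ` (Id_on X \<times> {(1,0)}) \<subseteq> X \<times> X - Id_on X"
      proof
        fix p assume "p \<in> snd ?H ` (Id_on X \<times> {(1,0)})"
        then obtain x where "x \<in> X" "p = snd ?H ((x,x),(1,0))" by (auto simp: Id_on_iff)
        then show "p \<in> X \<times> X - Id_on X" using a FX GX by (auto simp: Id_on_iff)
      qed
      then show ?thesis by auto
    qed
    have I4: "\<exists>\<tau>\<in>Part (J X). snd ?H ` ((X \<times> X - Id_on X) \<times> {(1,0)}) \<subseteq> \<tau>"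
      using B
    proof
      assume a: "\<forall>x\<in>X. \<forall>y\<in>X. x \<noteq> y \<longrightarrow> fst G x = fst F y"
      have "snd ?H ` ((X \<times> X - Id_on X) \<times> {(1,0)}) \<subseteq> Id_on X"
      proof
        fix p assume "p \<in> snd ?H ` ((X \<times> X - Id_on X) \<times> {(1,0)})"
        then obtain x y where "x \<in> X" "y \<in> X" "x \<noteq> y" "p = snd ?H ((x,y),(1,0))" by (auto simp: Id_on_iff)
        then show "p \<in> Id_on X" using a FX by (auto simp: Id_on_iff)
      qed
      then show ?thesis by auto
    next
      assume a: "\<forall>x\<in>X. \<forall>y\<in>X. x \<noteq> y \<longrightarrow> fst G x \<noteq> fst F y"
      have "snd ?H ` ((X \<times> X - Id_on X) \<times> {(1,0)}) \<subseteq> X \<times> X - Id_on X"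
      proof
        fix p assume "p \<in> snd ?H ` ((X \<times> X - Id_on X) \<times> {(1,0)})"
        then obtain x y where "x \<in> X" "y \<in> X" "x \<noteq> y" "p = snd ?H ((x,y),(1,0))" by (auto simp: Id_on_iff)
        then show "p \<in> X \<times> X - Id_on X" using a FX GX by (auto simp: Id_on_iff)
      qed
      then show ?thesis by auto
    qed
    show "\<exists>\<tau>\<in>Part (J X). snd ?H ` \<sigma> \<subseteq> \<tau>"
    proof (cases "e = (1,0)")
      case True
      then show ?thesis using se I3 I4 by auto
    next
      case False
      then have e: "e = (0,0) \<or> e = (1,1)" using se(3) by auto
      show ?thesis using se(1,2) I1[OF e] I2[OF e] by auto
    qed
  qed
  have M: "qs_morphism ?P (J X) ?H"
    unfolding qs_morphism_def using c1 c2 c3 c4 c5 by blast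
  have E1: "\<forall>a\<in>Obj (J X). fst ?H (a, 0) = fst F a \<and> fst ?H (a, 1) = fst G a" by simp
  have E2: "\<forall>f\<in>Mor (J X). snd ?H (f, (0, 0)) = snd F f \<and> snd ?H (f, (1, 1)) = snd G f"
  proof
    fix f assume "f \<in> Mor (J X)"
    then obtain x y where "f = (x,y)" "x \<in> X" "y \<in> X" by auto
    then show "snd ?H (f, (0, 0)) = snd F f \<and> snd ?H (f, (1, 1)) = snd G f" using Fm Gm by simp
  qed
  show ?thesis unfolding qs_homotopy_def using M E1 E2 by blast
qed


lemma agree_simeq:
  assumes "qs_morphism (J X) (J X) F" "inj_on (fst F) X" "qs_morphism (J X) (J X) G"
    and ag: "\<forall>x\<in>X. fst G x = fst F x"
  shows "qs_simeq (J X) (J X) F G"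
proof -
  have iG: "inj_on (fst G) X" using assms(2) ag inj_on_cong by metis
  have B: "\<forall>x\<in>X. \<forall>y\<in>X. x \<noteq> y \<longrightarrow> fst G x \<noteq> fst F y"
    using ag assms(2) by (metis inj_onD)
  show ?thesis
    by (rule simeq_single, rule htpy_construct)
       (use morph_dest[OF assms(1)] morph_dest[OF assms(3)] assms(2) iG ag B in auto)
qed

lemma simeq_agree3:
  assumes fin: "finite X" and c3: "3 \<le> card X" and iF: "inj_on (fst F) X"
    and "qs_simeq (J X) (J X) F G"
  shows "\<forall>x\<in>X. fst G x = fst F x"
  using assms(4) unfolding qs_simeq_def
proof (induction rule: rtranclp_induct)
  case base then show ?case by simp
next
  case (step y z)
  have iy: "inj_on (fst y) X" using iF step(3) inj_on_cong by metis
  from step(2) consider H where "qs_homotopy (J X) (J X) H y z" | H where "qs_homotopy (J X) (J X) H z y"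
    unfolding qs_htpy_sim_def by blast
  then have "\<forall>x\<in>X. fst z x = fst y x"
  proof cases
    case 1
    note d = htpy_dest[OF 1]
    show ?thesis using agree3[OF fin c3 d(1) d(2) _ d(4)] iy by blast
  next
    case 2
    note d = htpy_dest[OF 2]
    show ?thesis using agree3[OF fin c3 d(1) d(2) _ d(4)] iy by auto
  qed
  then show ?case using step(3) by auto
qed

lemma simeq_inj2:
  assumes c2: "card X = 2" and "qs_simeq (J X) (J X) F G"
  shows "inj_on (fst F) X \<longleftrightarrow> inj_on (fst G) X"
  using assms(2) unfolding qs_simeq_def
proof (induction rule: rtranclp_induct)
  case base then show ?case by simp
next
  case (step y z)
  from step(2) consider H where "qs_homotopy (J X) (J X) H y z" | H where "qs_homotopy (J X) (J X) H z y"
    unfolding qs_htpy_sim_def by blast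
  then have "inj_on (fst y) X \<longleftrightarrow> inj_on (fst z) X"
  proof cases
    case 1
    note d = htpy_dest[OF 1]
    show ?thesis using agree2[OF c2 d(1) d(2) d(3)] by blast
  next
    case 2
    note d = htpy_dest[OF 2]
    show ?thesis using agree2[OF c2 d(1) d(2) d(3)] by blast
  qed
  then show ?case using step(3) by auto
qed

lemma hclass_char3:
  assumes fin: "finite X" and c3: "3 \<le> card X"
    and M: "qs_morphism (J X) (J X) F" and iF: "inj_on (fst F) X"
  shows "hclass (J X) F = {G. qs_morphism (J X) (J X) G \<and> (\<forall>x\<in>X. fst G x = fst F x)}"
  unfolding hclass_def using simeq_agree3[OF fin c3 iF] agree_simeq[OF M iF] by blast

lemma hclass_eq3:
  assumes fin: "finite X" and c3: "3 \<le> card X"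
    and M: "qs_morphism (J X) (J X) F" and iF: "inj_on (fst F) X"
    and M2: "qs_morphism (J X) (J X) G" and ag: "\<forall>x\<in>X. fst G x = fst F x"
  shows "hclass (J X) G = hclass (J X) F"
proof -
  have iG: "inj_on (fst G) X" using iF ag inj_on_cong by metis
  show ?thesis unfolding hclass_char3[OF fin c3 M iF] hclass_char3[OF fin c3 M2 iG] using ag by auto
qed

lemma comp_morph:
  assumes "qs_morphism (J X) (J X) F" "inj_on (fst F) X" "qs_morphism (J X) (J X) G" "inj_on (fst G) X"
  shows "qs_morphism (J X) (J X) (qs_comp F G)" "inj_on (fst (qs_comp F G)) X"
proof -
  note f = morph_dest[OF assms(1)] and g = morph_dest[OF assms(3)]
  have i: "inj_on (fst F \<circ> fst G) X"
    using assms(2,4) g(1) by (auto simp: inj_on_def)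
  then show "inj_on (fst (qs_comp F G)) X" by (simp add: qs_comp_def)
  show "qs_morphism (J X) (J X) (qs_comp F G)"
    by (rule morph_intro) (use f g i in \<open>auto simp: qs_comp_def\<close>)
qed

definition Psi :: "('a \<Rightarrow> 'a) \<Rightarrow> ('a \<Rightarrow> 'a) \<times> ('a \<times> 'a \<Rightarrow> 'a \<times> 'a)" where
  "Psi f = (f, \<lambda>m. (f (fst m), f (snd m)))"

lemma Psi_morph:
  assumes "\<forall>x\<in>X. f x \<in> X" "inj_on f X"
  shows "qs_morphism (J X) (J X) (Psi f)"
  by (rule morph_intro) (use assms in \<open>auto simp: Psi_def\<close>)

lemma idmor_morph: "qs_morphism (J X) (J X) qs_idmor" "inj_on (fst qs_idmor) X"
  by (rule morph_intro) (auto simp: qs_idmor_def)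

lemma inj_self_heq:
  assumes fin: "finite X" and M: "qs_morphism (J X) (J X) F" and iF: "inj_on (fst F) X"
  shows "self_heq (J X) F"
proof -
  note f = morph_dest[OF M]
  have bij: "bij_betw (fst F) X X"
    using endo_inj_surj[OF fin _ iF] f(1) iF by (auto simp: bij_betw_def)
  let ?g = "inv_into X (fst F)"
  have gX: "\<forall>x\<in>X. ?g x \<in> X" using bij_betwE[OF bij_betw_inv_into[OF bij]] by blast
  have ig: "inj_on ?g X" using bij_betw_inv_into[OF bij] unfolding bij_betw_def by (rule conjunct1)
  have MG: "qs_morphism (J X) (J X) (Psi ?g)" using Psi_morph[OF gX ig] .
  have iG: "inj_on (fst (Psi ?g)) X" using ig by (simp add: Psi_def)
  have c1: "qs_simeq (J X) (J X) (qs_comp F (Psi ?g)) qs_idmor"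
    using agree_simeq[OF comp_morph[OF M iF MG iG] idmor_morph(1)] bij
    by (simp add: qs_comp_def qs_idmor_def Psi_def bij_betw_inv_into_right)
  have c2: "qs_simeq (J X) (J X) (qs_comp (Psi ?g) F) qs_idmor"
    using agree_simeq[OF comp_morph[OF MG iG M iF] idmor_morph(1)] bij
    by (simp add: qs_comp_def qs_idmor_def Psi_def bij_betw_inv_into_left)
  show ?thesis unfolding self_heq_def using M MG c1 c2 by blast
qed

lemma self_heq_inj:
  assumes fin: "finite X" and c: "2 \<le> card X" and S: "self_heq (J X) F"
  shows "inj_on (fst F) X"
proof -
  obtain G where M: "qs_morphism (J X) (J X) F" and MG: "qs_morphism (J X) (J X) G"
    and s: "qs_simeq (J X) (J X) (qs_comp G F) qs_idmor"
    using S unfolding self_heq_def by blast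
  have "inj_on (fst (qs_comp G F)) X"
  proof (cases "card X = 2")
    case True
    show ?thesis using simeq_inj2[OF True s] idmor_morph(2) by blast
  next
    case False
    then have c3: "3 \<le> card X" using c by linarith
    have "\<forall>x\<in>X. fst (qs_comp G F) x = fst qs_idmor x"
      using simeq_agree3[OF fin c3 idmor_morph(2) simeq_sym[OF s]] by (simp add: qs_idmor_def)
    then show ?thesis using idmor_morph(2) inj_on_cong by metis
  qed
  then show ?thesis by (simp add: qs_comp_def inj_on_def)
qed

lemma hclass_simeq: "qs_simeq A A F G \<Longrightarrow> hclass A F = hclass A G"
  unfolding hclass_def using simeq_sym simeq_trans by metis


lemma haut_simps: "carrier (haut A) = hclass A ` {F. self_heq A F}"
  "mult (haut A) C D = hclass A (qs_comp (SOME F. F \<in> C) (SOME G. G \<in> D))"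
  by (simp_all add: haut_def)

lemma main2:
  assumes fin: "finite X" and c2: "card X = 2"
  shows "card (carrier (haut (J X))) = 1"
proof -
  obtain a b where X: "X = {a,b}" "a \<noteq> b" using c2 card_2_iff by metis
  have "carrier (haut (J X)) = {hclass (J X) qs_idmor}"
  proof
    show "{hclass (J X) qs_idmor} \<subseteq> carrier (haut (J X))"
      using inj_self_heq[OF fin idmor_morph] by (simp add: haut_simps)
    show "carrier (haut (J X)) \<subseteq> {hclass (J X) qs_idmor}"
    proof
      fix C assume "C \<in> carrier (haut (J X))"
      then obtain F where C: "C = hclass (J X) F" and S: "self_heq (J X) F" by (auto simp: haut_simps)
      have M: "qs_morphism (J X) (J X) F" using S unfolding self_heq_def by blast
      have iF: "inj_on (fst F) X" using self_heq_inj[OF fin _ S] c2 by simp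
      note f = morph_dest[OF M]
      have fa: "fst F a = a \<or> fst F a = b" "fst F b = a \<or> fst F b = b" using f(1) X by auto
      have ne: "fst F a \<noteq> fst F b" using iF X by (auto simp: inj_on_def)
      have A: "(\<forall>x\<in>X. fst qs_idmor x = fst F x) \<or> (\<forall>x\<in>X. fst qs_idmor x \<noteq> fst F x)"
        unfolding X(1) qs_idmor_def using fa ne by auto
      have B: "(\<forall>x\<in>X. \<forall>y\<in>X. x \<noteq> y \<longrightarrow> fst qs_idmor x = fst F y) \<or> (\<forall>x\<in>X. \<forall>y\<in>X. x \<noteq> y \<longrightarrow> fst qs_idmor x \<noteq> fst F y)"
        unfolding X(1) qs_idmor_def using fa ne X(2) by auto
      have "qs_simeq (J X) (J X) F qs_idmor"
        by (rule simeq_single, rule htpy_construct)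
           (use f iF idmor_morph(2) A B in \<open>auto simp: qs_idmor_def\<close>)
      then show "C \<in> {hclass (J X) qs_idmor}" using C hclass_simeq by blast
    qed
  qed
  then show ?thesis by simp
qed


lemma main3:
  assumes fin: "finite X" and c3: "3 \<le> card X"
  shows "haut (J X) \<cong> sym_group (card X)"
proof -
  define n where "n = card X"
  obtain e where e: "bij_betw e {1..n} X" using ex_bij_betw_nat_finite_1[OF fin] n_def by blast
  define e' where "e' = inv_into {1..n} e"
  have e'X: "\<And>x. x \<in> X \<Longrightarrow> e' x \<in> {1..n}"
    using bij_betwE[OF bij_betw_inv_into[OF e]] e'_def by blast
  have ee': "\<And>x. x \<in> X \<Longrightarrow> e (e' x) = x" using e e'_def bij_betw_inv_into_right by metis
  have e'e: "\<And>i. i \<in> {1..n} \<Longrightarrow> e' (e i) = i" using e e'_def bij_betw_inv_into_left by metis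
  have eX: "\<And>i. i \<in> {1..n} \<Longrightarrow> e i \<in> X" using bij_betwE[OF e] by blast
  have einj: "\<And>i j. i \<in> {1..n} \<Longrightarrow> j \<in> {1..n} \<Longrightarrow> e i = e j \<Longrightarrow> i = j"
    using bij_betw_imp_inj_on[OF e] by (meson inj_onD)
  define fo where "fo p = (\<lambda>x. if x \<in> X then e (p (e' x)) else x)" for p :: "nat \<Rightarrow> nat"
  define h where "h p = hclass (J X) (Psi (fo p))" for p
  have pin: "\<And>p i. p permutes {1..n} \<Longrightarrow> i \<in> {1..n} \<Longrightarrow> p i \<in> {1..n}"
    by (metis permutes_in_image)
  have foX: "\<And>p x. p permutes {1..n} \<Longrightarrow> x \<in> X \<Longrightarrow> fo p x \<in> X"
    unfolding fo_def using pin e'X eX by simp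
  have foinj: "\<And>p. p permutes {1..n} \<Longrightarrow> inj_on (fo p) X"
  proof (rule inj_onI)
    fix p x y assume p: "p permutes {1..n}" and xy: "x \<in> X" "y \<in> X" "fo p x = fo p y"
    then have "e (p (e' x)) = e (p (e' y))" unfolding fo_def by simp
    then have "p (e' x) = p (e' y)" using einj pin[OF p] e'X xy by blast
    then have "e' x = e' y" using permutes_inj[OF p] by (meson injD)
    then show "x = y" using ee' xy by metis
  qed
  have focomp: "\<And>p q x. p permutes {1..n} \<Longrightarrow> q permutes {1..n} \<Longrightarrow> x \<in> X \<Longrightarrow> fo p (fo q x) = fo (p \<circ> q) x"
  proof -
    fix p q x assume p: "p permutes {1..n}" and q: "q permutes {1..n}" and x: "x \<in> X"
    have q1: "q (e' x) \<in> {1..n}" using pin[OF q e'X[OF x]] .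
    have q2: "e (q (e' x)) \<in> X" using eX[OF q1] .
    have q3: "e' (e (q (e' x))) = q (e' x)" using e'e[OF q1] .
    have a: "fo q x = e (q (e' x))" unfolding fo_def using x by simp
    have b: "fo p (e (q (e' x))) = e (p (q (e' x)))" unfolding fo_def using q2 q3 by simp
    have c: "fo (p \<circ> q) x = e (p (q (e' x)))" unfolding fo_def using x by simp
    show "fo p (fo q x) = fo (p \<circ> q) x" unfolding a b c ..
  qed
  have Mp: "\<And>p. p permutes {1..n} \<Longrightarrow> qs_morphism (J X) (J X) (Psi (fo p))"
    by (rule Psi_morph) (use foX foinj in auto)
  have ip: "\<And>p. p permutes {1..n} \<Longrightarrow> inj_on (fst (Psi (fo p))) X"
    using foinj by (simp add: Psi_def)
  have inclass: "\<And>p. p permutes {1..n} \<Longrightarrow> Psi (fo p) \<in> h p"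
    unfolding h_def hclass_def using Mp simeq_refl by blast
  have char: "\<And>p. p permutes {1..n} \<Longrightarrow> h p = {G. qs_morphism (J X) (J X) G \<and> (\<forall>x\<in>X. fst G x = fo p x)}"
    unfolding h_def using hclass_char3[OF fin c3 Mp ip] by (simp add: Psi_def)
  have hom: "h \<in> hom (sym_group n) (haut (J X))"
  proof (rule homI)
    fix p assume "p \<in> carrier (sym_group n)"
    then have p: "p permutes {1..n}" by (simp add: sym_group_carrier)
    show "h p \<in> carrier (haut (J X))"
      unfolding haut_simps h_def using inj_self_heq[OF fin Mp[OF p] ip[OF p]] by blast
  next
    fix p q assume "p \<in> carrier (sym_group n)" "q \<in> carrier (sym_group n)"
    then have p: "p permutes {1..n}" and q: "q permutes {1..n}" by (simp_all add: sym_group_carrier)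
    define F' where "F' = (SOME F. F \<in> h p)"
    define G' where "G' = (SOME F. F \<in> h q)"
    have F': "F' \<in> h p" unfolding F'_def using inclass[OF p] by (rule someI)
    have G': "G' \<in> h q" unfolding G'_def using inclass[OF q] by (rule someI)
    have MF: "qs_morphism (J X) (J X) F'" and aF: "\<forall>x\<in>X. fst F' x = fo p x" using F' char[OF p] by auto
    have MG: "qs_morphism (J X) (J X) G'" and aG: "\<forall>x\<in>X. fst G' x = fo q x" using G' char[OF q] by auto
    have iF: "inj_on (fst F') X" using foinj[OF p] aF inj_on_cong by metis
    have iG: "inj_on (fst G') X" using foinj[OF q] aG inj_on_cong by metis
    note cm = comp_morph[OF MF iF MG iG]
    have ag: "\<forall>x\<in>X. fst (qs_comp F' G') x = fst (Psi (fo (p \<circ> q))) x"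
      using aF aG foX[OF q] focomp[OF p q] by (simp add: qs_comp_def Psi_def)
    have "mult (haut (J X)) (h p) (h q) = hclass (J X) (qs_comp F' G')"
      unfolding haut_simps F'_def G'_def ..
    also have "\<dots> = h (p \<circ> q)"
      unfolding h_def by (rule hclass_eq3[OF fin c3 Mp ip cm(1) ag]) (use permutes_compose[OF q p] in auto)
    finally show "h (mult (sym_group n) p q) = mult (haut (J X)) (h p) (h q)"
      by (simp add: sym_group_mult)
  qed
  have inj: "inj_on h (carrier (sym_group n))"
  proof (rule inj_onI)
    fix p q assume "p \<in> carrier (sym_group n)" "q \<in> carrier (sym_group n)" and hpq: "h p = h q"
    then have p: "p permutes {1..n}" and q: "q permutes {1..n}" by (simp_all add: sym_group_carrier)
    have "Psi (fo q) \<in> h p" using hpq inclass[OF q] by simp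
    then have ag: "\<forall>x\<in>X. fo q x = fo p x" using char[OF p] by (simp add: Psi_def)
    show "p = q"
    proof
      fix i show "p i = q i"
      proof (cases "i \<in> {1..n}")
        case True
        have "fo q (e i) = fo p (e i)" using ag eX[OF True] by blast
        then have "e (q i) = e (p i)" unfolding fo_def using eX[OF True] e'e[OF True] by simp
        then show ?thesis using einj pin p q True by metis
      next
        case False
        then show ?thesis using p q by (simp add: permutes_not_in)
      qed
    qed
  qed
  have surj: "h ` carrier (sym_group n) = carrier (haut (J X))"
  proof
    show "h ` carrier (sym_group n) \<subseteq> carrier (haut (J X))" using hom by (auto simp: hom_def)
    show "carrier (haut (J X)) \<subseteq> h ` carrier (sym_group n)"
    proof
      fix C assume "C \<in> carrier (haut (J X))"
      then obtain F where C: "C = hclass (J X) F" and S: "self_heq (J X) F" by (auto simp: haut_simps)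
      have M: "qs_morphism (J X) (J X) F" using S unfolding self_heq_def by blast
      have iF: "inj_on (fst F) X" using self_heq_inj[OF fin _ S] c3 by simp
      note f = morph_dest[OF M]
      have bij: "bij_betw (fst F) X X"
        using endo_inj_surj[OF fin _ iF] f(1) iF by (auto simp: bij_betw_def)
      define p where "p = (\<lambda>i. if i \<in> {1..n} then e' (fst F (e i)) else i)"
      have "bij_betw (e' \<circ> fst F \<circ> e) {1..n} {1..n}"
        using bij_betw_trans[OF bij_betw_trans[OF e bij] bij_betw_inv_into[OF e]] e'_def by (simp add: comp_assoc)
      then have "bij_betw p {1..n} {1..n}"
        by (rule bij_betw_cong[THEN iffD1, rotated]) (simp add: p_def)
      then have p: "p permutes {1..n}" by (rule bij_imp_permutes) (simp add: p_def del: atLeastAtMost_iff)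
      have ag: "\<forall>x\<in>X. fst (Psi (fo p)) x = fst F x"
        using e'X ee' f(1) by (simp add: Psi_def fo_def p_def)
      have "C = h p" unfolding C h_def by (rule hclass_eq3[OF fin c3 M iF Mp[OF p] ag, symmetric])
      moreover have "p \<in> carrier (sym_group n)" using p by (simp add: sym_group_carrier)
      ultimately show "C \<in> h ` carrier (sym_group n)" by blast
    qed
  qed
  have "h \<in> iso (sym_group n) (haut (J X))"
    using hom inj surj by (simp add: iso_def bij_betw_def)
  then have "sym_group n \<cong> haut (J X)" by (rule is_isoI)
  then show ?thesis unfolding n_def using group.iso_sym[OF sym_group_is_group] by blast
qed


theorem theorem4p4:
  fixes X :: "'a set" and S :: "('a \<times> 'a) set set"
  assumes "assoc_scheme X S"
    and "S = {Id_on X, (X \<times> X) - Id_on X}"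
  shows "(card X \<ge> 3 \<longrightarrow> haut (jmath X S) \<cong> sym_group (card X))
       \<and> (card X = 2 \<longrightarrow> card (carrier (haut (jmath X S))) = 1)"
proof -
  have fin: "finite X" using assms(1) unfolding assoc_scheme_def by blast
  have JJ: "jmath X S = J X" unfolding J_def assms(2) ..
  show ?thesis unfolding JJ using main2[OF fin] main3[OF fin] by blast
qed

end
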